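(* Let $H$ be a real Hilbert space, $t\in(0,1]$ and $b\in(0,1]$. Then for every $m\ge 1$ and every $\alpha$ with $0<\alpha \le \frac{(2-b)t}{(2-b)t+2}$, $$ \gamma_m^{t,b}(\alpha,H) \le \bigl(1+mb(2-b) t^2\bigr)^{-\alpha/2}. $$ Equivalently: for every dictionary $\mathcal D$ of $H$, every $f\in H$, $f\neq 0$, with $\|f\|_{A_1(\mathcal D)}<\infty$, and every realization of the WGA$(t,b)$, $$\|f-G^{t,b}_m(f,\mathcal D)\|\le \|f\|^{1-\alpha}\|f\|_{A_1(\mathcal D)}^{\alpha}\bigl(1+mb(2-b)t^2\bigr)^{-\alpha/2}.$$
   Context: $H$ is a real Hilbert space with inner product $\langle\cdot,\cdot\rangle$ and norm $\|\cdot\|$. A (symmetric) dictionary is a set $\mathcal D\subset H$ with $\|g\|=1$ for all $g\in\mathcal D$, $\overline{\operatorname{span}}\,\mathcal D=H$, and $g\in\mathcal D\Rightarrow -g\in\mathcal D$. $A_1(\mathcal D)$ is the closure of the convex hull of $\mathcal D$, and $\|f\|_{A_1(\mathcal D)}:=\inf\{M: f/M\in A_1(\mathcal D)\}$. Weak Greedy Algorithm with parameter $b$, WGA$(t,b)$: set $f_0:=f$; for $m\ge1$ choose any $\varphi_m\in\mathcal D$ with $\langle f_{m-1},\varphi_m\rangle\ge t\sup_{g\in\mathcal D}\langle f_{m-1},g\rangle$, set $f_m:=f_{m-1}-b\langle f_{m-1},\varphi_m\rangle\varphi_m$ and $G^{t,b}_m(f,\mathcal D):=b\sum_{j=1}^m\langle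 f_{j-1},\varphi_j\rangle\varphi_j$. For $\alpha\in(0,1]$, $$\gamma_m^{t,b}(\alpha,H):=\sup_{\mathcal D}\sup_f\sup_{G^{t,b}_m(f,\mathcal D)}\frac{\|f-G^{t,b}_m(f,\mathcal D)\|}{\|f\|^{1-\alpha}\|f\|_{A_1(\mathcal D)}^{\alpha}},$$ the suprema being over all dictionaries $\mathcal D$, all $f\ne0$ with $\|f\|_{A_1(\mathcal D)}<\infty$, and all possible realizations of the algorithm. *)

theory Defs
  imports "HOL-Analysis.Analysis"
begin

definition dictionary :: "'a::{real_inner,complete_space} set \<Rightarrow> bool" where
  "dictionary D \<longleftrightarrow> (\<forall>g\<in>D. norm g = 1) \<and> closure (span D) = UNIV \<and> (\<forall>g\<in>D. - g \<in> D)"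

definition A1 :: "'a::real_normed_vector set \<Rightarrow> 'a set" where
  "A1 D = closure (convex hull D)"

definition A1_norm :: "'a::real_normed_vector set \<Rightarrow> 'a \<Rightarrow> real" where
  "A1_norm D f = Inf {M. M > 0 \<and> scaleR (1 / M) f \<in> A1 D}"

definition A1_finite :: "'a::real_normed_vector set \<Rightarrow> 'a \<Rightarrow> bool" where
  "A1_finite D f \<longleftrightarrow> (\<exists>M. M > 0 \<and> scaleR (1 / M) f \<in> A1 D)"

fun wga_res :: "real \<Rightarrow> 'a::real_inner \<Rightarrow> (nat \<Rightarrow> 'a) \<Rightarrow> nat \<Rightarrow> 'a" where
  "wga_res b f \<phi> 0 = f"
| "wga_res b f \<phi> (Suc m) =
     wga_res b f \<phi> m - (b * inner (wga_res b f \<phi> m) (\<phi> (Suc m))) *\<^sub>R \<phi> (Suc m)"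

definition wga_approx :: "real \<Rightarrow> 'a::real_inner \<Rightarrow> (nat \<Rightarrow> 'a) \<Rightarrow> nat \<Rightarrow> 'a" where
  "wga_approx b f \<phi> m =
     b *\<^sub>R (\<Sum>j=1..m. inner (wga_res b f \<phi> (j - 1)) (\<phi> j) *\<^sub>R \<phi> j)"

definition wga_realization ::
  "real \<Rightarrow> real \<Rightarrow> 'a::real_inner set \<Rightarrow> 'a \<Rightarrow> (nat \<Rightarrow> 'a) \<Rightarrow> nat \<Rightarrow> bool" where
  "wga_realization t b D f \<phi> m \<longleftrightarrow>
     (\<forall>j\<in>{1..m}. \<phi> j \<in> D \<and>
        inner (wga_res b f \<phi> (j - 1)) (\<phi> j)
          \<ge> t * (SUP g\<in>D. inner (wga_res b f \<phi> (j - 1)) g))"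

end

theory Submission
  imports Defs
begin


lemma step_prod:
  fixes a a' c B p b t :: real
  assumes "0 \<le> a'" "a' = a - b*(2-b)*c^2" "0 \<le> c" "t*a \<le> c*B" "0 < B"
    "p = (2-b)*t" "0 < b" "b < 2" "0 < t"
  shows "a' * (B + b*c) powr p \<le> a * B powr p"
proof (cases "a' = 0")
  case True
  have "a \<ge> a'" using assms by (simp add: mult_nonneg_nonneg)
  then show ?thesis using True assms by simp
next
  case False
  have a'pos: "a' > 0" using False assms(1) by simp
  have "a \<ge> a'" using assms by (simp add: mult_nonneg_nonneg)
  hence apos: "a > 0" using a'pos by simp
  have e1: "a' \<le> a * exp (- (b*(2-b)*c^2/a))"
  proof -
    have "1 + (- (b*(2-b)*c^2/a)) \<le> exp (- (b*(2-b)*c^2/a))" by (rule exp_ge_add_one_self)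
    hence "a * (1 + (- (b*(2-b)*c^2/a))) \<le> a * exp (- (b*(2-b)*c^2/a))"
      using apos by (intro mult_left_mono) auto
    moreover have "a * (1 + (- (b*(2-b)*c^2/a))) = a'" using apos unfolding assms(2) by (simp add: field_simps)
    ultimately show ?thesis by simp
  qed
  have bc: "b*c \<ge> 0" using assms by simp
  have e2: "(B + b*c) powr p \<le> B powr p * exp (p * (b*c/B))"
  proof -
    have "B + b*c = B * (1 + b*c/B)" using assms(5) by (simp add: field_simps)
    hence "(B + b*c) powr p = B powr p * (1 + b*c/B) powr p"
      using assms(5) bc by (simp add: powr_mult)
    moreover have "(1 + b*c/B) powr p \<le> exp (p * (b*c/B))"
    proof -
      have pos: "1 + b*c/B > 0" using bc assms(5) by (simp add: add_pos_nonneg)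
      have "(1 + b*c/B) powr p = exp (p * ln (1 + b*c/B))" using pos by (simp add: powr_def)
      moreover have "ln (1 + b*c/B) \<le> b*c/B" using ln_le_minus_one[OF pos] by simp
      moreover have "p \<ge> 0" using assms by simp
      ultimately have "p * ln (1 + b*c/B) \<le> p * (b*c/B)" by (intro mult_left_mono) auto
      thus ?thesis using \<open>(1 + b*c/B) powr p = exp (p * ln (1 + b*c/B))\<close> by simp
    qed
    ultimately show ?thesis by (simp add: mult_left_mono)
  qed
  have ex: "p * (b*c/B) - b*(2-b)*c^2/a \<le> 0"
  proof -
    have "p * (b*c/B) = (2-b)*b*c*t/B" using assms by simp
    have "(2-b)*b*c*(t*a) \<le> (2-b)*b*c*(c*B)"
      using assms bc by (intro mult_left_mono) auto
    hence "(2-b)*b*c*t/B \<le> b*(2-b)*c^2/a"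
      using apos assms(5) by (simp add: field_simps power2_eq_square)
    moreover have "p * (b*c/B) = (2-b)*b*c*t/B" unfolding assms(6) by (simp add: field_simps)
    ultimately show ?thesis by linarith
  qed
  have "a' * (B + b*c) powr p \<le> (a * exp (- (b*(2-b)*c^2/a))) * (B powr p * exp (p * (b*c/B)))"
    using e1 e2 a'pos by (intro mult_mono) auto
  also have "\<dots> = a * B powr p * exp (p * (b*c/B) - b*(2-b)*c^2/a)"
    by (simp add: exp_diff exp_minus field_simps)
  also have "\<dots> \<le> a * B powr p * 1"
    using ex apos by (intro mult_left_mono) auto
  finally show ?thesis by simp
qed

lemma step_decay:
  fixes x x' \<kappa> r :: real
  assumes "0 < x" "0 < x'" "x' \<le> x * (1 - \<kappa> * x powr r)" "0 < r" "0 \<le> \<kappa>"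
  shows "x powr (-r) + r * \<kappa> \<le> x' powr (-r)"
proof -
  define y where "y = \<kappa> * x powr r"
  have y0: "y \<ge> 0" using assms by (simp add: y_def)
  have y1: "1 - y > 0"
  proof (rule ccontr)
    assume "\<not> 1 - y > 0"
    hence "x * (1 - y) \<le> 0" using assms(1) by (simp add: mult_nonpos_nonneg mult_le_0_iff)
    thus False using assms(2,3) y_def by simp
  qed
  have "(x * (1 - y)) powr (-r) \<le> x' powr (-r)"
    using assms y1 y_def by (intro powr_mono2') auto
  moreover have "(x * (1 - y)) powr (-r) = x powr (-r) * (1 - y) powr (-r)"
    using assms(1) y1 by (simp add: powr_mult)
  moreover have "(1 - y) powr (-r) \<ge> 1 + r * y"
  proof -
    have "(1 - y) powr (-r) = exp (-r * ln (1 - y))" using y1 by (simp add: powr_def)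
    moreover have "ln (1 - y) \<le> -y" using ln_le_minus_one[OF y1] by simp
    hence "r * ln (1 - y) \<le> r * (-y)" using assms(4) by (intro mult_left_mono) auto
    hence "-r * ln (1 - y) \<ge> r * y" by simp
    hence "exp (-r * ln (1 - y)) \<ge> 1 + r * y"
      by (meson exp_ge_add_one_self order_trans exp_le_cancel_iff add_le_cancel_left)
    ultimately show ?thesis by simp
  qed
  ultimately have "x powr (-r) * (1 + r*y) \<le> x' powr (-r)"
    by (metis mult_left_mono order_trans powr_ge_zero)
  moreover have "x powr (-r) * (1 + r*y) = x powr (-r) + r * \<kappa>"
    using assms(1) by (simp add: y_def field_simps powr_minus)
  ultimately show ?thesis by simp
qed



lemma seq_bound:
  fixes a c B :: "nat \<Rightarrow> real" and A t b \<alpha> :: real and m :: nat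
  assumes t: "0 < t" and b: "0 < b" "b < 2"
    and A: "0 < A" "a 0 \<le> A^2" "0 < a 0"
    and nonneg: "\<forall>k\<le>m. 0 \<le> a k"
    and rec: "\<forall>k<m. a (Suc k) = a k - b*(2-b)*c (Suc k)^2"
    and cnn: "\<forall>k<m. 0 \<le> c (Suc k)"
    and key: "\<forall>k<m. t * a k \<le> c (Suc k) * B k"
    and B0: "B 0 = A" and Bs: "\<forall>k<m. B (Suc k) = B k + b * c (Suc k)"
    and al: "0 < \<alpha>" "\<alpha> \<le> (2-b)*t/((2-b)*t+2)"
  shows "a m \<le> a 0 powr (1-\<alpha>) * A powr (2*\<alpha>) * (1 + real m*b*(2-b)*t^2) powr (-\<alpha>)"
proof -
  define p where "p = (2-b)*t"
  define s where "s = 2/p"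
  define r where "r = 1 + s"
  define \<beta> where "\<beta> = b*(2-b)"
  define \<kappa> where "\<kappa> = \<beta>*t^2/(a 0 powr s * A^2)"
  have p0: "p > 0" using t b by (simp add: p_def)
  have s0: "s > 0" using p0 by (simp add: s_def)
  have r1: "r \<ge> 1" "r > 0" using s0 by (auto simp: r_def)
  have \<beta>0: "\<beta> > 0" using b by (simp add: \<beta>_def)
  have \<kappa>0: "\<kappa> \<ge> 0" using \<beta>0 A by (simp add: \<kappa>_def)
  have dec: "a (Suc k) \<le> a k" if "k < m" for k
    using rec that \<beta>0 by (simp add: \<beta>_def[symmetric])
  have st1: "\<forall>k\<le>m. A \<le> B k \<and> a k * B k powr p \<le> a 0 * A powr p"
  proof (intro allI impI)
    fix k assume "k \<le> m"
    then show "A \<le> B k \<and> a k * B k powr p \<le> a 0 * A powr p"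
    proof (induction k)
      case 0 then show ?case using B0 by simp
    next
      case (Suc k)
      hence km: "k < m" by simp
      hence IH: "A \<le> B k" "a k * B k powr p \<le> a 0 * A powr p" using Suc by auto
      have "A \<le> B (Suc k)" using IH Bs cnn km b by (simp add: add_increasing2)
      moreover have "a (Suc k) * B (Suc k) powr p \<le> a k * B k powr p"
        unfolding Bs[rule_format, OF km]
        apply (rule step_prod[where t=t])
        using nonneg[rule_format, OF Suc.prems] apply simp
        using rec km apply simp
        using cnn km apply simp
        using key km apply simp
        using IH(1) A(1) apply linarith
        using p_def apply simp
        using b t by simp_all
      ultimately show ?case using IH by linarith
    qed
  qed
  have st2: "a (Suc k) \<le> a k * (1 - \<kappa> * a k powr r)" if km: "k < m" and xk: "a k > 0" for k
  proof -
    define x where "x = a k"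
    define Bk where "Bk = B k"
    have Bk0: "Bk > 0" using st1 km A by (auto simp: Bk_def intro: less_le_trans)
    have cc: "c (Suc k) \<ge> t * x / Bk" using key km Bk0 by (simp add: x_def Bk_def field_simps)
    have tx0: "t * x / Bk \<ge> 0" using t xk Bk0 by (simp add: x_def)
    have c2: "c (Suc k)^2 \<ge> (t*x/Bk)^2" using cc tx0 by (simp add: power_mono)
    have e1: "a (Suc k) \<le> x - \<beta> * (t*x/Bk)^2"
      using rec km c2 \<beta>0 by (simp add: x_def \<beta>_def[symmetric] mult_left_mono)
    have Bp: "Bk powr p \<le> a 0 * A powr p / x"
      using st1 km xk by (simp add: x_def Bk_def field_simps)
    have ps: "p * s = 2" using p0 by (simp add: s_def)
    have "(Bk powr p) powr s = Bk^2"
      using Bk0 by (simp add: powr_powr ps powr_numeral)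
    hence "Bk^2 = (Bk powr p) powr s" by simp
    also
    have "\<dots> \<le> (a 0 * A powr p / x) powr s"
      using Bp s0 by (intro powr_mono2) auto
    also have "\<dots> = a 0 powr s * (A powr p) powr s / x powr s"
      using A xk by (simp add: x_def powr_mult powr_divide)
    also have "\<dots> = a 0 powr s * A^2 / x powr s"
      using A by (simp add: powr_powr ps powr_numeral)
    finally have B2: "Bk^2 \<le> a 0 powr s * A^2 / x powr s" .
    have pos1: "a 0 powr s * A^2 / x powr s > 0" using A xk by (simp add: x_def)
    have "\<kappa> * x powr r * x = \<beta>*t^2 * x^2 / (a 0 powr s * A^2 / x powr s)"
      using xk A by (simp add: \<kappa>_def r_def x_def powr_add field_simps power2_eq_square)
    also have "\<dots> \<le> \<beta>*t^2 * x^2 / Bk^2"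
      apply (rule divide_left_mono[OF B2])
      using \<beta>0 xk apply (simp add: x_def)
      using pos1 Bk0 by (intro mult_pos_pos) auto
    also have "\<dots> = \<beta> * (t*x/Bk)^2" by (simp add: power_divide power_mult_distrib)
    finally have "\<kappa> * x powr r * x \<le> \<beta> * (t*x/Bk)^2" .
    thus ?thesis using e1 by (simp add: x_def algebra_simps)
  qed
  show ?thesis
  proof (cases "a m = 0")
    case True then show ?thesis by simp
  next
    case False
    hence am: "a m > 0" using nonneg by (simp add: less_le)
    have st3: "\<forall>k\<le>m. a k > 0 \<longrightarrow> a 0 powr (-r) + real k * (r*\<kappa>) \<le> a k powr (-r)"
    proof (intro allI impI)
      fix k assume "k \<le> m" "a k > 0"
      then show "a 0 powr (-r) + real k * (r*\<kappa>) \<le> a k powr (-r)"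
      proof (induction k)
        case 0 then show ?case by simp
      next
        case (Suc k)
        hence km: "k < m" by simp
        have ak: "a k > 0" using dec[OF km] Suc by simp
        have IH: "a 0 powr (-r) + real k * (r*\<kappa>) \<le> a k powr (-r)" using Suc ak by simp
        have "a k powr (-r) + r * \<kappa> \<le> a (Suc k) powr (-r)"
          using step_decay[OF ak Suc.prems(2) st2[OF km ak] r1(2) \<kappa>0] .
        then show ?case using IH by (simp add: algebra_simps)
      qed
    qed
    define K where "K = real m * \<beta> * t^2"
    define u where "u = a 0 / A^2"
    define v where "v = u * (1 + K)"
    have K0: "K \<ge> 0" using \<beta>0 by (simp add: K_def)
    have u0: "u > 0" "u \<le> 1" using A by (auto simp: u_def)
    have v0: "v > 0" using u0 K0 by (simp add: v_def)
    have Y: "a 0 powr (-r) * (1 + r*K*u) \<le> a m powr (-r)"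
    proof -
      have E: "a 0 powr (-r) = 1 / (a 0 * a 0 powr s)"
      proof -
        have "a 0 powr r = a 0 * a 0 powr s" using A by (simp add: r_def powr_add)
        thus ?thesis using A by (simp add: powr_minus divide_inverse)
      qed
      have "a 0 powr (-r) * (1 + r*K*u) = a 0 powr (-r) + real m * (r*\<kappa>)"
        unfolding E using A by (simp add: K_def u_def \<kappa>_def r_def powr_add powr_minus field_simps)
      thus ?thesis using st3 am by simp
    qed
    have ar: "\<alpha> * r \<le> 1"
    proof -
      have "\<alpha> * r \<le> (p/(p+2)) * r" using al r1 unfolding p_def by (intro mult_right_mono) auto
      also have "\<dots> = 1"
      proof -
        have "p * p + p * 2 > 0" using p0 by (simp add: add_pos_pos)
        thus ?thesis using p0 by (simp add: r_def s_def field_simps)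
      qed
      finally show ?thesis .
    qed
    have vb: "v powr (\<alpha>*r) \<le> 1 + r*K*u"
    proof (cases "v \<le> 1")
      case True
      have "v powr (\<alpha>*r) \<le> 1" using True v0 al r1 by (simp add: powr_le1)
      moreover have "r*K*u \<ge> 0" using r1 K0 u0 by simp
      ultimately show ?thesis by linarith
    next
      case False
      have "v powr (\<alpha>*r) \<le> v powr 1" using False ar by (intro powr_mono) auto
      also have "\<dots> = u + u*K" using v0 by (simp add: v_def algebra_simps)
      also have "\<dots> \<le> 1 + r*K*u"
      proof -
        have "1*(K*u) \<le> r*(K*u)" using r1 K0 u0 by (intro mult_right_mono) auto
        hence "u*K \<le> r*(K*u)" by (simp add: mult.commute)
        moreover have "r*K*u = r*(K*u)" by simp
        ultimately show ?thesis using u0 by linarith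
      qed
      finally show ?thesis .
    qed
    define X where "X = a 0 powr (1-\<alpha>) * A powr (2*\<alpha>) * (1 + real m*b*(2-b)*t^2) powr (-\<alpha>)"
    have XX: "X = a 0 * v powr (-\<alpha>)"
    proof -
      have A2: "(A^2) powr \<alpha> = A powr (2*\<alpha>)"
        using A by (simp add: powr_powr[symmetric] powr_numeral)
      have "v powr (-\<alpha>) = (a 0) powr (-\<alpha>) * (A^2) powr \<alpha> * (1+K) powr (-\<alpha>)"
        using A K0 by (simp add: v_def u_def powr_mult powr_divide powr_minus divide_inverse inverse_powr)
      moreover have "a 0 * a 0 powr (-\<alpha>) = a 0 powr (1-\<alpha>)"
        using A by (simp add: powr_diff powr_minus divide_inverse)
      moreover have "1 + real m*b*(2-b)*t^2 = 1 + K" by (simp add: K_def \<beta>_def)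
      ultimately show ?thesis unfolding X_def A2 by (simp add: mult.assoc mult.left_commute)
    qed
    have X0: "X > 0" using XX A v0 by simp
    have "X powr (-r) = a 0 powr (-r) * v powr (\<alpha>*r)"
      using A v0 by (simp add: XX powr_mult powr_powr)
    also have "\<dots> \<le> a m powr (-r)"
      using vb Y A by (meson mult_left_mono order_trans powr_ge_zero)
    finally have XY: "X powr (-r) \<le> a m powr (-r)" .
    show ?thesis
    proof (rule ccontr)
      assume "\<not> ?thesis"
      hence "X < a m" by (simp add: X_def)
      hence "a m powr (-r) < X powr (-r)" using X0 r1 by (intro powr_less_mono2_neg) auto
      thus False using XY by simp
    qed
  qed
qed



lemma res_approx: "f - wga_approx b f \<phi> m = wga_res b f \<phi> m"
proof (induction m)
  case 0 then show ?case by (simp add: wga_approx_def)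
next
  case (Suc m)
  have "wga_approx b f \<phi> (Suc m) = wga_approx b f \<phi> m
        + (b * inner (wga_res b f \<phi> m) (\<phi> (Suc m))) *\<^sub>R \<phi> (Suc m)"
    by (simp add: wga_approx_def scaleR_right_distrib)
  then show ?case using Suc by (simp add: algebra_simps)
qed

lemma sup_facts:
  fixes D :: "'a::real_inner set"
  assumes "D \<noteq> {}" "\<forall>g\<in>D. norm g = 1"
  shows "bdd_above ((\<lambda>g. inner h g) ` D)"
    and "\<And>g. g \<in> D \<Longrightarrow> inner h g \<le> (SUP g\<in>D. inner h g)"
    and "(SUP g\<in>D. inner h g) \<le> norm h"
proof -
  have le: "inner h g \<le> norm h" if "g \<in> D" for g
    using norm_cauchy_schwarz[of h g] assms that by simp
  show bdd: "bdd_above ((\<lambda>g. inner h g) ` D)"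
    using le by (intro bdd_aboveI2) auto
  show "\<And>g. g \<in> D \<Longrightarrow> inner h g \<le> (SUP g\<in>D. inner h g)"
    using bdd by (intro cSUP_upper) auto
  show "(SUP g\<in>D. inner h g) \<le> norm h"
    using assms le by (intro cSUP_least) auto
qed

lemma sup_nonneg:
  fixes D :: "'a::real_inner set"
  assumes "D \<noteq> {}" "\<forall>g\<in>D. norm g = 1" "\<forall>g\<in>D. - g \<in> D"
  shows "0 \<le> (SUP g\<in>D. inner h g)"
proof -
  obtain g where g: "g \<in> D" using assms by auto
  have "inner h g \<le> (SUP g\<in>D. inner h g)" "inner h (-g) \<le> (SUP g\<in>D. inner h g)"
    using sup_facts(2)[OF assms(1,2)] g assms(3) by blast+
  thus ?thesis by simp
qed

lemma A1_bound:
  fixes D :: "'a::{real_inner,complete_space} set"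
  assumes "D \<noteq> {}" "\<forall>g\<in>D. norm g = 1" "\<forall>g\<in>D. - g \<in> D" "A1_finite D f"
  shows "inner h f \<le> A1_norm D f * (SUP g\<in>D. inner h g)"
    and "0 \<le> A1_norm D f"
proof -
  define S where "S = (SUP g\<in>D. inner h g)"
  define Ms where "Ms = {M. M > 0 \<and> scaleR (1 / M) f \<in> A1 D}"
  have S0: "S \<ge> 0" unfolding S_def using sup_nonneg[OF assms(1-3)] .
  have ne: "Ms \<noteq> {}" using assms(4) by (auto simp: Ms_def A1_finite_def)
  have bnd: "inner h f \<le> M * S" if "M \<in> Ms" for M
  proof -
    define C where "C = {x. inner h x \<le> S}"
    have "closed C" unfolding C_def
      by (intro closed_Collect_le continuous_intros)
    have "convex C" unfolding C_def
      by (rule convex_halfspace_le)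
    have "D \<subseteq> C" using sup_facts(2)[OF assms(1,2)] by (auto simp: C_def S_def)
    hence "convex hull D \<subseteq> C" using \<open>convex C\<close> by (rule hull_minimal)
    hence "closure (convex hull D) \<subseteq> C" using \<open>closed C\<close> by (rule closure_minimal)
    moreover have "scaleR (1/M) f \<in> closure (convex hull D)" "M > 0"
      using that by (auto simp: Ms_def A1_def)
    ultimately have "inner h (scaleR (1/M) f) \<le> S" by (auto simp: C_def)
    hence "inner h f / M \<le> S" by simp
    thus ?thesis using \<open>M > 0\<close> by (simp add: field_simps)
  qed
  have A0: "0 \<le> Inf Ms" using ne by (intro cInf_greatest) (auto simp: Ms_def)
  show "0 \<le> A1_norm D f" using A0 by (simp add: A1_norm_def Ms_def)
  show "inner h f \<le> A1_norm D f * (SUP g\<in>D. inner h g)"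
  proof (cases "S = 0")
    case True
    obtain M where "M \<in> Ms" using ne by auto
    then have "inner h f \<le> 0" using bnd True by fastforce
    thus ?thesis using True by (simp add: S_def)
  next
    case False
    hence Sp: "S > 0" using S0 by simp
    have "inner h f / S \<le> Inf Ms"
      using ne bnd Sp by (intro cInf_greatest) (auto simp: field_simps)
    hence "inner h f \<le> Inf Ms * S" using Sp by (simp add: field_simps)
    thus ?thesis by (simp add: A1_norm_def Ms_def S_def)
  qed
qed



theorem theorem2p2:
  fixes D :: "'a::{real_inner,complete_space} set"
    and f :: 'a and \<phi> :: "nat \<Rightarrow> 'a"
    and t b \<alpha> :: real and m :: nat
  assumes "0 < t" "t \<le> 1" "0 < b" "b \<le> 1"
    and "m \<ge> 1"
    and "0 < \<alpha>" "\<alpha> \<le> (2 - b) * t / ((2 - b) * t + 2)"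
    and "dictionary D"
    and "f \<noteq> 0" "A1_finite D f"
    and "wga_realization t b D f \<phi> m"
  shows "norm (f - wga_approx b f \<phi> m)
           \<le> norm f powr (1 - \<alpha>) * A1_norm D f powr \<alpha>
              * (1 + real m * b * (2 - b) * t\<^sup>2) powr (- \<alpha> / 2)"
proof -
  note t = assms(1,2) and b = assms(3,4) and al = assms(6,7)
  have Dn: "\<forall>g\<in>D. norm g = 1" and Ds: "\<forall>g\<in>D. - g \<in> D" and Dsp: "closure (span D) = UNIV"
    using assms(8) by (auto simp: dictionary_def)
  have Dne: "D \<noteq> {}"
  proof
    assume "D = {}"
    hence "closure (span D) = {0}" by simp
    thus False using Dsp assms(9) by auto
  qed
  define r where "r k = wga_res b f \<phi> k" for k
  define S where "S k = (SUP g\<in>D. inner (r k) g)" for k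
  define c where "c k = inner (r (k-1)) (\<phi> k)" for k
  define A where "A = A1_norm D f"
  define a where "a k = (norm (r k))^2" for k
  define B where "B k = A + b * (\<Sum>i=1..k. c i)" for k
  have real: "\<forall>j\<in>{1..m}. \<phi> j \<in> D \<and> c j \<ge> t * S (j-1)"
    using assms(11) by (simp add: wga_realization_def c_def S_def r_def)
  have Abnd: "inner h f \<le> A * (SUP g\<in>D. inner h g)" for h
    unfolding A_def by (rule A1_bound(1)[OF Dne Dn Ds assms(10)])
  have A0: "A \<ge> 0" unfolding A_def by (rule A1_bound(2)[OF Dne Dn Ds assms(10)])
  have S0: "S k \<ge> 0" for k unfolding S_def by (rule sup_nonneg[OF Dne Dn Ds])
  have Sup: "inner (r k) g \<le> S k" if "g \<in> D" for k g
    unfolding S_def using sup_facts(2)[OF Dne Dn] that .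
  have nfA: "norm f \<le> A"
  proof -
    have "norm f * norm f = inner f f" by (simp add: norm_eq_sqrt_inner)
    also have "\<dots> \<le> A * (SUP g\<in>D. inner f g)" by (rule Abnd)
    also have "\<dots> \<le> A * norm f" using A0 sup_facts(3)[OF Dne Dn] by (intro mult_left_mono) auto
    finally show ?thesis using assms(9) by simp
  qed
  have nf0: "norm f > 0" using assms(9) by simp
  have Ap: "A > 0" using nfA nf0 by linarith
  have cnn: "c j \<ge> 0" if "j \<in> {1..m}" for j
  proof -
    have "t * S (j-1) \<ge> 0" using t S0 by simp
    thus ?thesis using real that by fastforce
  qed
  have rstep: "r (Suc k) = r k - (b * c (Suc k)) *\<^sub>R \<phi> (Suc k)" for k
    by (simp add: r_def c_def)
  have rec: "a (Suc k) = a k - b*(2-b)*c (Suc k)^2" if "k < m" for k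
  proof -
    have ph: "norm (\<phi> (Suc k)) = 1" using real Dn that by auto
    hence "inner (\<phi> (Suc k)) (\<phi> (Suc k)) = 1" by (metis norm_eq_sqrt_inner real_sqrt_eq_1_iff)
    moreover have "inner (r k) (\<phi> (Suc k)) = c (Suc k)" by (simp add: c_def)
    ultimately show ?thesis
      unfolding a_def rstep power2_norm_eq_inner
      by (simp add: inner_diff_left inner_diff_right inner_commute algebra_simps power2_eq_square)
  qed
  have key: "t * a k \<le> c (Suc k) * B k" if km: "k < m" for k
  proof -
    have rk: "r k = f - b *\<^sub>R (\<Sum>i=1..k. c i *\<^sub>R \<phi> i)"
      using res_approx[of f b \<phi> k] by (simp add: r_def c_def wga_approx_def)
    have "a k = inner (r k) (r k)" by (simp add: a_def power2_norm_eq_inner)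
    also have "\<dots> = inner (r k) f - b * (\<Sum>i=1..k. c i * inner (r k) (\<phi> i))"
      by (subst (2) rk) (simp add: inner_diff_right inner_sum_right)
    also have "\<dots> \<le> A * S k + b * (S k * (\<Sum>i=1..k. c i))"
    proof -
      have "inner (r k) f \<le> A * S k" using Abnd by (simp add: S_def)
      moreover have "- (\<Sum>i=1..k. c i * inner (r k) (\<phi> i)) \<le> S k * (\<Sum>i=1..k. c i)"
      proof -
        have "(\<Sum>i=1..k. c i * (- S k)) \<le> (\<Sum>i=1..k. c i * inner (r k) (\<phi> i))"
        proof (rule sum_mono)
          fix i assume i: "i \<in> {1..k}"
          hence im: "i \<in> {1..m}" using km by auto
          have "\<phi> i \<in> D" using real im by auto
          hence "inner (r k) (- \<phi> i) \<le> S k" using Ds Sup by blast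
          hence "- S k \<le> inner (r k) (\<phi> i)" by simp
          thus "c i * (- S k) \<le> c i * inner (r k) (\<phi> i)"
            using cnn[OF im] by (rule mult_left_mono)
        qed
        moreover have "(\<Sum>i=1..k. c i * (- S k)) = - (S k * (\<Sum>i=1..k. c i))"
          by (simp add: sum_distrib_left sum_negf mult.commute)
        ultimately show ?thesis by linarith
      qed
      ultimately show ?thesis using b
        by (smt (verit, ccfv_SIG) mult_left_mono right_diff_distrib')
    qed
    also have "\<dots> = S k * B k" by (simp add: B_def algebra_simps)
    finally have ak: "a k \<le> S k * B k" .
    have B0: "B k \<ge> 0"
    proof -
      have "(\<Sum>i=1..k. c i) \<ge> 0" using cnn km by (intro sum_nonneg) auto
      thus ?thesis using A0 b by (simp add: B_def)
    qed
    have "t * a k \<le> t * (S k * B k)" using ak t by (intro mult_left_mono) auto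
    also have "\<dots> = (t * S k) * B k" by simp
    also have "\<dots> \<le> c (Suc k) * B k"
    proof (rule mult_right_mono[OF _ B0])
      have "Suc k \<in> {1..m}" using km by simp
      thus "t * S k \<le> c (Suc k)" using real by fastforce
    qed
    finally show ?thesis .
  qed
  have main: "a m \<le> a 0 powr (1-\<alpha>) * A powr (2*\<alpha>) * (1 + real m*b*(2-b)*t^2) powr (-\<alpha>)"
  proof (rule seq_bound[where c=c and B=B])
    show "0 < t" "0 < b" "b < 2" "0 < A" "0 < \<alpha>" "\<alpha> \<le> (2-b)*t/((2-b)*t+2)"
      using t b al Ap by auto
    show "a 0 \<le> A^2" using nfA nf0 by (simp add: a_def r_def power_mono)
    show "0 < a 0" using nf0 by (simp add: a_def r_def)
    show "\<forall>k\<le>m. 0 \<le> a k" by (simp add: a_def)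
    show "\<forall>k<m. a (Suc k) = a k - b*(2-b)*c (Suc k)^2" using rec by blast
    show "\<forall>k<m. 0 \<le> c (Suc k)" using cnn by auto
    show "\<forall>k<m. t * a k \<le> c (Suc k) * B k" using key by blast
    show "B 0 = A" by (simp add: B_def)
    show "\<forall>k<m. B (Suc k) = B k + b * c (Suc k)" by (simp add: B_def algebra_simps)
  qed
  define T where "T = norm f powr (1 - \<alpha>) * A powr \<alpha> * (1 + real m * b * (2 - b) * t\<^sup>2) powr (- \<alpha> / 2)"
  have T0: "T \<ge> 0" by (simp add: T_def)
  have "T^2 = a 0 powr (1-\<alpha>) * A powr (2*\<alpha>) * (1 + real m*b*(2-b)*t^2) powr (-\<alpha>)"
  proof -
    have e1: "(norm f powr (1-\<alpha>))^2 = a 0 powr (1-\<alpha>)"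
    proof -
      have "(norm f powr (1-\<alpha>))^2 = norm f powr (1-\<alpha>) * norm f powr (1-\<alpha>)"
        by (simp add: power2_eq_square)
      also have "\<dots> = norm f powr (2*(1-\<alpha>))" by (simp add: powr_add[symmetric])
      also have "\<dots> = (norm f powr 2) powr (1-\<alpha>)" by (rule powr_powr[symmetric])
      also have "\<dots> = (norm f ^ 2) powr (1-\<alpha>)" using nf0 by (simp add: powr_numeral)
      finally show ?thesis by (simp add: a_def r_def)
    qed
    have e2: "(A powr \<alpha>)^2 = A powr (2*\<alpha>)"
      using Ap by (simp add: power2_eq_square powr_add[symmetric])
    have e3: "((1 + real m * b * (2 - b) * t\<^sup>2) powr (- \<alpha> / 2))^2 = (1 + real m*b*(2-b)*t^2) powr (-\<alpha>)"
      by (simp add: power2_eq_square powr_add[symmetric])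
    show ?thesis unfolding T_def power_mult_distrib e1 e2 e3 ..
  qed
  hence "(norm (r m))^2 \<le> T^2" using main by (simp add: a_def)
  hence "norm (r m) \<le> T" using T0 by (rule power2_le_imp_le)
  thus ?thesis using res_approx[of f b \<phi> m] by (simp add: r_def T_def A_def)
qed

end
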